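(* Let $0<\lambda<\frac{5-\sqrt{21}}{2}$ and let $K$ be the attractor of the IFS $f_1(x)=\lambda x$, $f_2(x)=\lambda x+2\lambda$, $f_3(x)=\lambda x+3\lambda-\lambda^2$, $f_4(x)=\lambda x+1-\lambda$. Then every $x\in K$ either has exactly $2^k$ codings for some integer $k\ge0$, or has uncountably many codings.
   Context: A coding of $x\in K$ is a sequence $(i_n)\in\{1,2,3,4\}^{\mathbb{N}}$ with $x=\lim_{n\to\infty}f_{i_1}\circ\cdots\circ f_{i_n}(0)$. *)

theory Defs
  imports "HOL-Analysis.Analysis"
begin

definition ifs_map :: "real \<Rightarrow> nat \<Rightarrow> real \<Rightarrow> real" where
  "ifs_map l i x =
     (if i = 1 then l * x
      else if i = 2 then l * x + 2 * l
      else if i = 3 then l * x + 3 * l - l^2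
      else l * x + 1 - l)"

text \<open>f_{c 0} o f_{c 1} o ... o f_{c (n-1)}; the sequence (i_1, i_2, ...) is c 0, c 1, ...\<close>
definition ifs_comp :: "real \<Rightarrow> (nat \<Rightarrow> nat) \<Rightarrow> nat \<Rightarrow> real \<Rightarrow> real" where
  "ifs_comp l c n = foldr (\<lambda>k g. ifs_map l (c k) \<circ> g) [0..<n] id"

definition is_coding :: "real \<Rightarrow> real \<Rightarrow> (nat \<Rightarrow> nat) \<Rightarrow> bool" where
  "is_coding l x c \<longleftrightarrow> (\<forall>n. c n \<in> {1,2,3,4}) \<and> (\<lambda>n. ifs_comp l c n 0) \<longlonglongrightarrow> x"

definition codings :: "real \<Rightarrow> real \<Rightarrow> (nat \<Rightarrow> nat) set" where
  "codings l x = {c. is_coding l x c}"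

end

theory Submission
  imports Defs
begin

definition tt :: "real \<Rightarrow> nat \<Rightarrow> real" where "tt l i = ifs_map l i 0"
definition pp :: "real \<Rightarrow> (nat \<Rightarrow> nat) \<Rightarrow> real" where "pp l c = (\<Sum>k. l^k * tt l (c k))"
definition sh :: "nat \<Rightarrow> (nat \<Rightarrow> nat) \<Rightarrow> nat \<Rightarrow> nat" where "sh n c = (\<lambda>k. c (n+k))"
definition CC :: "(nat \<Rightarrow> nat) set" where "CC = {c. \<forall>n. c n \<in> {1,2,3,4}}"
definition swp :: "nat \<Rightarrow> nat \<Rightarrow> nat \<Rightarrow> nat \<Rightarrow> bool" where
  "swp a b a' b' \<longleftrightarrow> (a=2\<and>b=4\<and>a'=3\<and>b'=1) \<or> (a=3\<and>b=1\<and>a'=2\<and>b'=4)"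
definition BB :: "(nat \<Rightarrow> nat) \<Rightarrow> nat set" where
  "BB c = {n. (c n = 2 \<and> c (Suc n) = 4) \<or> (c n = 3 \<and> c (Suc n) = 1)}"
definition s1 :: "nat \<Rightarrow> nat" where "s1 a = (if a = 2 then 3 else 2)"
definition s2 :: "nat \<Rightarrow> nat" where "s2 b = (if b = 4 then 1 else 4)"
definition sw :: "(nat \<Rightarrow> nat) \<Rightarrow> nat set \<Rightarrow> nat \<Rightarrow> nat" where
  "sw c F n = (if n \<in> F then s1 (c n) else if n > 0 \<and> n - 1 \<in> F then s2 (c n) else c n)"

lemma ifs_map_tt: "ifs_map l i y = l*y + tt l i"
  by (simp add: tt_def ifs_map_def)

lemma tt_simps: "tt l 1 = 0" "tt l (Suc 0) = 0" "tt l 2 = 2*l" "tt l 3 = 3*l - l^2" "tt l 4 = 1 - l"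
  by (simp_all add: tt_def ifs_map_def)

lemma ifs_comp_gen: "foldr (\<lambda>k g. ifs_map l (c k) \<circ> g) [0..<n] g z = l^n * g z + (\<Sum>k<n. l^k * tt l (c k))"
proof (induction n arbitrary: g)
  case 0 then show ?case by simp
next
  case (Suc n)
  have "foldr (\<lambda>k g. ifs_map l (c k) \<circ> g) [0..<Suc n] g z = foldr (\<lambda>k g. ifs_map l (c k) \<circ> g) [0..<n] (ifs_map l (c n) \<circ> g) z" by simp
  also have "\<dots> = l^n * (l * g z + tt l (c n)) + (\<Sum>k<n. l^k * tt l (c k))" by (simp only: Suc.IH comp_apply ifs_map_tt)
  also have "\<dots> = l^Suc n * g z + (\<Sum>k<Suc n. l^k * tt l (c k))" by (simp add: algebra_simps)
  finally show ?case .
qed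

lemma ifs_comp_0: "ifs_comp l c n 0 = (\<Sum>k<n. l^k * tt l (c k))"
  using ifs_comp_gen[of l c n id 0] by (simp add: ifs_comp_def)

lemma sh_CC: "c \<in> CC \<Longrightarrow> sh n c \<in> CC" by (simp add: CC_def sh_def)
lemma sh_sh: "sh m (sh n c) = sh (n+m) c" by (simp add: sh_def add.assoc)
lemma sh_0: "sh 0 c = c" by (simp add: sh_def)
lemma sh_app: "sh n c k = c (n+k)" by (simp add: sh_def)

context
  fixes l :: real
  assumes l0: "0 < l" and lq: "l^2 - 5*l + 1 > 0" and l4: "l < 1/4"
begin

lemma sq: "l^2 < l"
proof -
  have "l*l < 1*l" using l0 l4 by (intro mult_strict_right_mono) auto
  then show ?thesis by (simp add: power2_eq_square)
qed

lemma tt_bounds: "i \<in> {1,2,3,4} \<Longrightarrow> 0 \<le> tt l i \<and> tt l i \<le> 1 - l"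
  using sq l0 l4 lq by (auto simp: tt_simps)

lemma summ: "c \<in> CC \<Longrightarrow> summable (\<lambda>k. l^k * tt l (c k))"
proof -
  assume c: "c \<in> CC"
  have g: "summable (\<lambda>k. (1-l) * l^k)"
    using l0 l4 by (intro summable_mult summable_geometric) auto
  show ?thesis
  proof (rule summable_comparison_test'[OF g])
    fix n
    have "0 \<le> tt l (c n)" "tt l (c n) \<le> 1 - l" using tt_bounds c by (auto simp: CC_def)
    then show "norm (l^n * tt l (c n)) \<le> (1-l) * l^n"
      using l0 by (simp add: abs_mult mult.commute mult_left_mono)
  qed
qed

lemma pp_bounds: "c \<in> CC \<Longrightarrow> 0 \<le> pp l c \<and> pp l c \<le> 1"
proof -
  assume c: "c \<in> CC"
  have tb: "\<And>n. 0 \<le> tt l (c n) \<and> tt l (c n) \<le> 1 - l" using tt_bounds c by (auto simp: CC_def)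
  have g: "summable (\<lambda>k. (1-l) * l^k)"
    using l0 l4 by (intro summable_mult summable_geometric) auto
  have "0 \<le> pp l c" unfolding pp_def
    using tb l0 by (intro suminf_nonneg summ c) auto
  moreover have "pp l c \<le> (\<Sum>k. (1-l) * l^k)" unfolding pp_def
    using tb l0 by (intro suminf_le summ c g) (simp add: mult.commute mult_left_mono)
  moreover have "(\<Sum>k. (1-l) * l^k) = 1"
    using l0 l4 by (simp add: suminf_mult suminf_geometric)
  ultimately show ?thesis by simp
qed

lemma pp_head: "c \<in> CC \<Longrightarrow> pp l c = tt l (c 0) + l * pp l (sh 1 c)"
proof -
  assume c: "c \<in> CC"
  have s: "summable (\<lambda>k. l^k * tt l (c k))" using summ c .
  have s1: "summable (\<lambda>k. l^k * tt l (sh 1 c k))" using summ sh_CC c by blast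
  have "(\<Sum>n. l^(Suc n) * tt l (c (Suc n))) = pp l c - tt l (c 0)"
    using suminf_split_head[OF s] by (simp add: pp_def)
  moreover have "(\<Sum>n. l^(Suc n) * tt l (c (Suc n))) = l * pp l (sh 1 c)"
    unfolding pp_def using suminf_mult[OF s1, of l]
    by (simp add: sh_def mult.assoc)
  ultimately show ?thesis by simp
qed

lemma pp_sh: "c \<in> CC \<Longrightarrow> pp l (sh n c) = tt l (c n) + l * pp l (sh (Suc n) c)"
  using pp_head[OF sh_CC[of c n]] by (simp add: sh_sh sh_app)

lemma loc: "c \<in> CC \<Longrightarrow> tt l (c 0) \<le> pp l c \<and> pp l c \<le> tt l (c 0) + l"
  using pp_head[of c] pp_bounds[OF sh_CC[of c 1]] l0
  by (auto simp: mult_le_cancel_left1)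

lemma first_diff: "c \<in> CC \<Longrightarrow> d \<in> CC \<Longrightarrow> pp l c = pp l d \<Longrightarrow> c 0 \<noteq> d 0 \<Longrightarrow>
   (c 0 = 2 \<and> d 0 = 3) \<or> (c 0 = 3 \<and> d 0 = 2)"
proof -
  assume c: "c \<in> CC" and d: "d \<in> CC" and e: "pp l c = pp l d" and ne: "c 0 \<noteq> d 0"
  have c0: "c 0 \<in> {1,2,3,4}" and d0: "d 0 \<in> {1,2,3,4}" using c d by (auto simp: CC_def)
  note lc = loc[OF c] and ld = loc[OF d]
  show ?thesis using c0 d0 ne lc ld e sq l0 l4 lq
    by (auto simp: tt_simps)
qed

lemma case23: "c \<in> CC \<Longrightarrow> d \<in> CC \<Longrightarrow> pp l c = pp l d \<Longrightarrow> c 0 = 2 \<Longrightarrow> d 0 = 3 \<Longrightarrow>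
   c 1 = 4 \<and> d 1 = 1 \<and> pp l (sh 2 c) = pp l (sh 2 d)"
proof -
  assume c: "c \<in> CC" and d: "d \<in> CC" and e: "pp l c = pp l d" and c0: "c 0 = 2" and d0: "d 0 = 3"
  define a where "a = pp l (sh 1 c)"
  define b where "b = pp l (sh 1 d)"
  have "pp l c = 2*l + l*a" using pp_head[OF c] c0 by (simp add: a_def tt_simps)
  moreover have "pp l d = 3*l - l^2 + l*b" using pp_head[OF d] d0 by (simp add: b_def tt_simps)
  ultimately have "l * (a - (1 - l + b)) = 0" using e by (simp add: algebra_simps power2_eq_square)
  then have ab: "a = 1 - l + b" using l0 by simp
  have c1: "c 1 \<in> {1,2,3,4}" and d1: "d 1 \<in> {1,2,3,4}" using c d by (auto simp: CC_def)
  have la: "tt l (c 1) \<le> a \<and> a \<le> tt l (c 1) + l" using loc[OF sh_CC[OF c, of 1]] by (simp add: a_def sh_app)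
  have lb: "tt l (d 1) \<le> b \<and> b \<le> tt l (d 1) + l" using loc[OF sh_CC[OF d, of 1]] by (simp add: b_def sh_app)
  have "a \<le> 1" "0 \<le> b" using pp_bounds[OF sh_CC[OF c, of 1]] pp_bounds[OF sh_CC[OF d, of 1]]
    by (auto simp: a_def b_def)
  have c14: "c 1 = 4"
  proof (rule ccontr)
    assume "c 1 \<noteq> 4"
    then have "c 1 = 1 \<or> c 1 = 2 \<or> c 1 = 3" using c1 by auto
    then show False using la ab \<open>0 \<le> b\<close> sq l0 l4 lq by (auto simp: tt_simps)
  qed
  have d11: "d 1 = 1"
  proof (rule ccontr)
    assume "d 1 \<noteq> 1"
    then have "d 1 = 2 \<or> d 1 = 3 \<or> d 1 = 4" using d1 by auto
    then show False using lb ab \<open>a \<le> 1\<close> sq l0 l4 lq by (auto simp: tt_simps)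
  qed
  have "a = 1 - l + l * pp l (sh 2 c)" using pp_sh[OF c, of 1] c14 by (simp add: a_def tt_simps numeral_2_eq_2)
  moreover have "b = l * pp l (sh 2 d)" using pp_sh[OF d, of 1] d11 by (simp add: b_def tt_simps numeral_2_eq_2)
  ultimately have "l * pp l (sh 2 c) = l * pp l (sh 2 d)" using ab by linarith
  then show ?thesis using l0 c14 d11 by (metis less_irrefl mult_left_cancel)
qed

lemma step0: "c \<in> CC \<Longrightarrow> d \<in> CC \<Longrightarrow> pp l c = pp l d \<Longrightarrow>
   (c 0 = d 0 \<and> pp l (sh 1 c) = pp l (sh 1 d)) \<or>
   (swp (c 0) (c 1) (d 0) (d 1) \<and> pp l (sh 2 c) = pp l (sh 2 d))"
proof -
  assume c: "c \<in> CC" and d: "d \<in> CC" and e: "pp l c = pp l d"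
  show ?thesis
  proof (cases "c 0 = d 0")
    case True
    then have "l * pp l (sh 1 c) = l * pp l (sh 1 d)" using pp_head[OF c] pp_head[OF d] e by (metis add_left_cancel)
    then show ?thesis using True l0 by (metis less_irrefl mult_left_cancel)
  next
    case False
    then consider "c 0 = 2 \<and> d 0 = 3" | "c 0 = 3 \<and> d 0 = 2" using first_diff[OF c d e] by blast
    then show ?thesis
    proof cases
      case 1 then show ?thesis using case23[OF c d e] by (auto simp: swp_def)
    next
      case 2 then show ?thesis using case23[OF d c e[symmetric]] by (auto simp: swp_def)
    qed
  qed
qed

lemma stepn: "c \<in> CC \<Longrightarrow> d \<in> CC \<Longrightarrow> pp l (sh n c) = pp l (sh n d) \<Longrightarrow>
   (c n = d n \<and> pp l (sh (Suc n) c) = pp l (sh (Suc n) d)) \<or>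
   (swp (c n) (c (Suc n)) (d n) (d (Suc n)) \<and> pp l (sh (Suc (Suc n)) c) = pp l (sh (Suc (Suc n)) d))"
  using step0[of "sh n c" "sh n d"] sh_CC[of c n] sh_CC[of d n] by (simp add: sh_sh sh_app)

lemma BB_nonover: "n \<in> BB c \<Longrightarrow> Suc n \<notin> BB c"
  by (auto simp: BB_def)

lemma sw_CC: "c \<in> CC \<Longrightarrow> sw c F \<in> CC"
  by (auto simp: CC_def sw_def s1_def s2_def)

lemma pair_zero: "m \<in> BB c \<Longrightarrow>
   (l^m * tt l (s1 (c m)) - l^m * tt l (c m)) + (l^Suc m * tt l (s2 (c (Suc m))) - l^Suc m * tt l (c (Suc m))) = 0"
  by (auto simp: BB_def s1_def s2_def tt_simps algebra_simps power2_eq_square)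

lemma partial_sw:
  assumes F: "F \<subseteq> BB c"
  defines "e \<equiv> \<lambda>k. l^k * tt l (sw c F k) - l^k * tt l (c k)"
  shows "(\<Sum>k<N. e k) = (if 0 < N \<and> N - 1 \<in> F then e (N - 1) else 0)"
proof (induction N)
  case 0 then show ?case by simp
next
  case (Suc N)
  have sum: "(\<Sum>k<Suc N. e k) = (\<Sum>k<N. e k) + e N" by simp
  show ?case
  proof (cases "N \<in> F")
    case True
    have "\<not> (0 < N \<and> N - 1 \<in> F)"
    proof
      assume "0 < N \<and> N - 1 \<in> F"
      then have "N - 1 \<in> BB c" "Suc (N - 1) = N" using F by auto
      then show False using BB_nonover True F by fastforce
    qed
    have "(\<Sum>k<N. e k) = 0" using Suc.IH \<open>\<not> (0 < N \<and> N - 1 \<in> F)\<close> by presburger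
    then show ?thesis using True sum by simp
  next
    case False
    show ?thesis
    proof (cases "0 < N \<and> N - 1 \<in> F")
      case True
      then obtain m where m: "N = Suc m" "m \<in> F" by (cases N) auto
      have mB: "m \<in> BB c" using m F by auto
      have "e m + e N = 0" using pair_zero[OF mB] m False
        by (simp add: e_def sw_def)
      then show ?thesis using Suc sum True False m by simp
    next
      case False2: False
      have "e N = 0" using False False2 by (auto simp add: e_def sw_def)
      moreover have "(\<Sum>k<N. e k) = 0" using Suc.IH False2 by presburger
      ultimately show ?thesis using sum False by simp
    qed
  qed
qed

lemma pp_sw: "c \<in> CC \<Longrightarrow> F \<subseteq> BB c \<Longrightarrow> pp l (sw c F) = pp l c"
proof -
  assume c: "c \<in> CC" and F: "F \<subseteq> BB c"
  define e where "e \<equiv> \<lambda>k. l^k * tt l (sw c F k) - l^k * tt l (c k)"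
  have s1: "summable (\<lambda>k. l^k * tt l (sw c F k))" using summ sw_CC c by blast
  have s2: "summable (\<lambda>k. l^k * tt l (c k))" using summ c by blast
  have se: "summable e" unfolding e_def using s1 s2 by (rule summable_diff)
  have "e sums (pp l (sw c F) - pp l c)"
    unfolding e_def pp_def using s1 s2 by (intro sums_diff summable_sums)
  then have A: "(\<lambda>N. \<Sum>k<N. e k) \<longlonglongrightarrow> pp l (sw c F) - pp l c" by (simp add: sums_def)
  have e0: "e \<longlonglongrightarrow> 0" using se by (rule summable_LIMSEQ_zero)
  have "(\<lambda>N. \<Sum>k<Suc N. e k) \<longlonglongrightarrow> 0"
  proof (rule Lim_null_comparison[OF _ tendsto_norm_zero[OF e0]])
    show "\<forall>\<^sub>F N in sequentially. norm (\<Sum>k<Suc N. e k) \<le> norm (e N)"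
      using partial_sw[OF F, of "Suc _"] by (simp add: e_def)
  qed
  then have "(\<lambda>N. \<Sum>k<N. e k) \<longlonglongrightarrow> 0" by (rule LIMSEQ_imp_Suc)
  then show ?thesis using A LIMSEQ_unique by fastforce
qed

lemma sw_diff: "F \<subseteq> BB c \<Longrightarrow> G \<subseteq> BB c \<Longrightarrow> n \<in> F \<Longrightarrow> n \<notin> G \<Longrightarrow> sw c F n \<noteq> sw c G n"
proof -
  assume F: "F \<subseteq> BB c" and G: "G \<subseteq> BB c" and n: "n \<in> F" "n \<notin> G"
  have nB: "n \<in> BB c" using n F by auto
  have "\<not> (0 < n \<and> n - 1 \<in> G)"
  proof
    assume "0 < n \<and> n - 1 \<in> G"
    then have "n - 1 \<in> BB c" "Suc (n - 1) = n" using G by auto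
    then show False using BB_nonover nB by fastforce
  qed
  then have "sw c G n = c n" using n by (auto simp add: sw_def)
  moreover have "sw c F n = s1 (c n)" using n by (simp add: sw_def)
  moreover have "s1 (c n) \<noteq> c n" using nB by (auto simp: BB_def s1_def)
  ultimately show ?thesis by simp
qed

lemma sw_inj: "inj_on (sw c) (Pow (BB c))"
proof (rule inj_onI)
  fix F G assume F: "F \<in> Pow (BB c)" and G: "G \<in> Pow (BB c)" and e: "sw c F = sw c G"
  show "F = G"
  proof (rule ccontr)
    assume "F \<noteq> G"
    then obtain n where "(n \<in> F \<and> n \<notin> G) \<or> (n \<in> G \<and> n \<notin> F)" by blast
    then show False using sw_diff[of F c G n] sw_diff[of G c F n] F G e by auto
  qed
qed

lemma sw_surj:
  assumes c: "c \<in> CC" and d: "d \<in> CC" and e: "pp l c = pp l d"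
  shows "d = sw c {n \<in> BB c. c n \<noteq> d n}"
proof -
  define P where "P n \<longleftrightarrow> pp l (sh n c) = pp l (sh n d) \<or>
     (0 < n \<and> swp (c (n-1)) (c n) (d (n-1)) (d n) \<and> pp l (sh (Suc n) c) = pp l (sh (Suc n) d))" for n
  have Pn: "P n" for n
  proof (induction n)
    case 0 then show ?case using e by (simp add: P_def sh_0)
  next
    case (Suc n)
    then show ?case
    proof (cases "pp l (sh n c) = pp l (sh n d)")
      case True
      then show ?thesis using stepn[OF c d True] by (auto simp: P_def)
    next
      case False
      then show ?thesis using Suc by (auto simp: P_def)
    qed
  qed
  have T: "c n = d n \<or> swp (c n) (c (Suc n)) (d n) (d (Suc n)) \<or>
        (0 < n \<and> swp (c (n-1)) (c n) (d (n-1)) (d n))" for n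
    using Pn[of n] stepn[OF c d, of n] by (auto simp: P_def)
  define F where "F = {n \<in> BB c. c n \<noteq> d n}"
  have "d = sw c F"
  proof
    fix n
    show "d n = sw c F n"
    proof (cases "n \<in> F")
      case True
      then have "n \<in> BB c" "c n \<noteq> d n" by (auto simp: F_def)
      then show ?thesis using T[of n] True by (auto simp: sw_def s1_def swp_def BB_def)
    next
      case nF: False
      show ?thesis
      proof (cases "0 < n \<and> n - 1 \<in> F")
        case True
        then obtain m where m: "n = Suc m" "m \<in> F" by (cases n) auto
        then have "m \<in> BB c" "c m \<noteq> d m" by (auto simp: F_def)
        then show ?thesis using T[of m] nF m by (auto simp: sw_def s2_def swp_def BB_def)
      next
        case False
        then have sw: "sw c F n = c n" using nF by (auto simp: sw_def)
        show ?thesis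
        proof (rule ccontr)
          assume ne: "d n \<noteq> sw c F n"
          then have "swp (c n) (c (Suc n)) (d n) (d (Suc n)) \<or> (0 < n \<and> swp (c (n-1)) (c n) (d (n-1)) (d n))"
            using T[of n] sw by auto
          then show False
          proof
            assume "swp (c n) (c (Suc n)) (d n) (d (Suc n))"
            then have "n \<in> F" using ne sw by (auto simp: F_def BB_def swp_def)
            then show False using nF by simp
          next
            assume a: "0 < n \<and> swp (c (n-1)) (c n) (d (n-1)) (d n)"
            then obtain m where m: "n = Suc m" by (cases n) auto
            then have "m \<in> F" using a by (auto simp: F_def BB_def swp_def)
            then show False using False m by simp
          qed
        qed
      qed
    qed
  qed
  then show ?thesis by (simp add: F_def)
qed

lemma codings_eq: "codings l x = {c \<in> CC. pp l c = x}"
proof (intro set_eqI iffI)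
  fix c assume "c \<in> codings l x"
  then have c: "c \<in> CC" and lim: "(\<lambda>n. \<Sum>k<n. l^k * tt l (c k)) \<longlonglongrightarrow> x"
    by (auto simp: codings_def is_coding_def CC_def ifs_comp_0)
  have "(\<lambda>n. \<Sum>k<n. l^k * tt l (c k)) \<longlonglongrightarrow> pp l c"
    using summ[OF c] unfolding pp_def by (rule summable_LIMSEQ)
  then show "c \<in> {c \<in> CC. pp l c = x}" using lim c LIMSEQ_unique by auto
next
  fix c assume "c \<in> {c \<in> CC. pp l c = x}"
  then have c: "c \<in> CC" and x: "pp l c = x" by auto
  have "(\<lambda>n. \<Sum>k<n. l^k * tt l (c k)) \<longlonglongrightarrow> pp l c"
    using summ[OF c] unfolding pp_def by (rule summable_LIMSEQ)
  then show "c \<in> codings l x" using c x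
    by (auto simp: codings_def is_coding_def CC_def ifs_comp_0)
qed

lemma codings_sw: "c \<in> CC \<Longrightarrow> codings l (pp l c) = sw c ` Pow (BB c)"
proof (intro set_eqI iffI)
  fix d assume c: "c \<in> CC" and "d \<in> codings l (pp l c)"
  then have d: "d \<in> CC" "pp l c = pp l d" by (auto simp: codings_eq)
  then have "d = sw c {n \<in> BB c. c n \<noteq> d n}" using sw_surj c by blast
  then show "d \<in> sw c ` Pow (BB c)" by blast
next
  fix d assume c: "c \<in> CC" and "d \<in> sw c ` Pow (BB c)"
  then obtain F where "F \<subseteq> BB c" "d = sw c F" by blast
  then show "d \<in> codings l (pp l c)" using c sw_CC pp_sw by (auto simp: codings_eq)
qed


lemma exists_coding:
  assumes K: "compact K" and inv: "K = (\<Union>i\<in>{1,2,3,4}. ifs_map l i ` K)" and x: "x \<in> K"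
  shows "\<exists>c\<in>CC. pp l c = x"
proof -
  have "\<forall>y\<in>K. \<exists>i. i \<in> {1,2,3,4} \<and> (\<exists>z. z \<in> K \<and> y = ifs_map l i z)"
  proof
    fix y assume "y \<in> K"
    then have "y \<in> (\<Union>i\<in>{1,2,3,4}. ifs_map l i ` K)" using inv by simp
    then show "\<exists>i. i \<in> {1,2,3,4} \<and> (\<exists>z. z \<in> K \<and> y = ifs_map l i z)" by blast
  qed
  then obtain I Z where IZ: "\<And>y. y \<in> K \<Longrightarrow> I y \<in> {1,2,3,4} \<and> Z y \<in> K \<and> y = ifs_map l (I y) (Z y)"
    by metis
  define y where "y n = (Z ^^ n) x" for n
  have yK: "y n \<in> K" for n by (induction n) (auto simp: y_def x IZ)
  define c where "c n = I (y n)" for n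
  have c: "c \<in> CC" using IZ yK by (auto simp: CC_def c_def)
  have rel: "y n = l * y (Suc n) + tt l (c n)" for n
    using IZ[OF yK[of n]] by (simp add: y_def c_def ifs_map_tt)
  have part: "x = (\<Sum>k<n. l^k * tt l (c k)) + l^n * y n" for n
  proof (induction n)
    case 0 then show ?case by (simp add: y_def)
  next
    case (Suc n)
    have "l^n * y n = l^n * tt l (c n) + l^Suc n * y (Suc n)"
      by (subst rel) (simp add: algebra_simps)
    then show ?case using Suc by simp
  qed
  obtain M where M: "\<And>z. z \<in> K \<Longrightarrow> norm z \<le> M"
    using compact_imp_bounded[OF K] by (auto simp: bounded_iff)
  have g0: "(\<lambda>n. M * l^n) \<longlonglongrightarrow> 0"
    using l0 l4 by (intro tendsto_mult_right_zero LIMSEQ_power_zero) auto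
  have "(\<lambda>n. l^n * y n) \<longlonglongrightarrow> 0"
  proof (rule Lim_null_comparison[OF _ g0])
    show "\<forall>\<^sub>F n in sequentially. norm (l^n * y n) \<le> M * l^n"
    proof (intro always_eventually allI)
      fix n
      have "norm (l^n * y n) = l^n * norm (y n)" using l0 by (simp add: abs_mult)
      also have "\<dots> \<le> l^n * M" using M[OF yK[of n]] l0 by (intro mult_left_mono) auto
      finally show "norm (l^n * y n) \<le> M * l^n" by (simp add: mult.commute)
    qed
  qed
  then have "(\<lambda>n. x - l^n * y n) \<longlonglongrightarrow> x - 0" by (intro tendsto_diff tendsto_const)
  moreover have "(\<lambda>n. x - l^n * y n) = (\<lambda>n. \<Sum>k<n. l^k * tt l (c k))"
  proof
    fix n show "x - l^n * y n = (\<Sum>k<n. l^k * tt l (c k))" using part[of n] by linarith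
  qed
  moreover have "(\<lambda>n. \<Sum>k<n. l^k * tt l (c k)) \<longlonglongrightarrow> pp l c"
    using summ[OF c] unfolding pp_def by (rule summable_LIMSEQ)
  ultimately have "pp l c = x" using LIMSEQ_unique by fastforce
  then show ?thesis using c by blast
qed


end

lemma uncountable_Pow: "infinite (B :: nat set) \<Longrightarrow> uncountable (Pow B)"
proof
  assume inf: "infinite B" and cnt: "countable (Pow B)"
  have "infinite (Pow B)"
  proof
    assume "finite (Pow B)"
    then show False using inf by simp
  qed
  then obtain g where g: "bij_betw g (UNIV :: nat set) (Pow B)" using countable_infiniteE' cnt by blast
  obtain e :: "nat \<Rightarrow> nat" where e: "bij_betw e B UNIV"
    using countableE_infinite[of B] inf by blast
  have "(g \<circ> e) ` B = g ` (e ` B)" by (simp add: image_comp)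
  then have "(g \<circ> e) ` B = Pow B" using g e by (simp add: bij_betw_def)
  then show False using Cantors_theorem by blast
qed


theorem corollary2p24:
  fixes l :: real and K :: "real set"
  assumes "0 < l" and "l < (5 - sqrt 21) / 2"
    and "compact K" and "K \<noteq> {}"
    and "K = (\<Union>i\<in>{1,2,3,4}. ifs_map l i ` K)"
  shows "\<forall>x\<in>K. (\<exists>k::nat. finite (codings l x) \<and> card (codings l x) = 2 ^ k)
                 \<or> uncountable (codings l x)"
proof
  fix x assume x: "x \<in> K"
  have s21: "sqrt 21 < 5 - 2*l" using assms(2) by simp
  have "(9/2::real) < sqrt 21" by (rule real_less_rsqrt) (simp add: power2_eq_square)
  then have l4: "l < 1/4" using s21 by simp
  have "(sqrt 21)^2 < (5 - 2*l)^2"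
    using s21 by (intro power_strict_mono) auto
  then have "21 < (5 - 2*l)^2" by simp
  then have lq: "l^2 - 5*l + 1 > 0" by (simp add: power2_eq_square algebra_simps)
  note A = assms(1) lq l4
  obtain c where c: "c \<in> CC" "pp l c = x" using exists_coding[OF A assms(3) assms(5) x] by blast
  have N: "codings l x = sw c ` Pow (BB c)" using codings_sw[OF A c(1)] c(2) by simp
  have inj: "inj_on (sw c) (Pow (BB c))" by (rule sw_inj[OF A])
  show "(\<exists>k::nat. finite (codings l x) \<and> card (codings l x) = 2 ^ k) \<or> uncountable (codings l x)"
  proof (cases "finite (BB c)")
    case True
    then have "finite (codings l x) \<and> card (codings l x) = 2 ^ card (BB c)"
      using N inj by (simp add: card_image card_Pow)
    then show ?thesis by blast
  next
    case False
    have "uncountable (codings l x)"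
    proof
      assume "countable (codings l x)"
      then have "countable (Pow (BB c))" using N inj countable_image_inj_on by metis
      then show False using uncountable_Pow False by blast
    qed
    then show ?thesis by blast
  qed
qed


end
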